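(* Let $\vartheta\in\{p,bp,r\}$. Then both of the following inclusions hold and are strict (proper): (i) $\mathcal{H}_{\vartheta}\subset\mathcal{BV}$; (ii) $\mathcal{H}_{\vartheta}\subset\mathcal{BV}_{\vartheta 0}$.
   Context: $\Omega$ denotes the set of all complex double sequences $x=(x_{kl})_{k,l\ge 1}$. A double sequence is $p$-convergent (Pringsheim convergent) to $L$ if for every $\varepsilon>0$ there is $N$ with $|x_{kl}-L|<\varepsilon$ for all $k,l\ge N$; $bp$-convergent if bounded and $p$-convergent; $r$-convergent (regularly convergent) if $p$-convergent and every row and every column converges. For $\vartheta\in\{p,bp,r\}$, $\mathcal{C}_{\vartheta 0}$ is the set of double sequences $\vartheta$-convergent to $0$. $\Delta x_{kl}=x_{kl}-x_{k+1,l}-x_{k,l+1}+x_{k+1,l+1}$, and $\mathcal{H}_{\vartheta}=\{x\in\Omega:\sum_{k,l=1}^{\infty}|kl\,\Delta x_{kl}|<\infty\}\cap\mathcal{C}_{\vartheta 0}$. $\mathcal{BV}=\{x\in\Omega:\sum_{k,l=1}^{\infty}|\Delta x_{kl}|<\infty\}$ is the space of double sequences of bounded variation, and $\mathcal{BV}_{\vartheta 0}=\mathcal{BV}\cap\mathcal{C}_{\vartheta 0}$. *)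

theory Defs
  imports "HOL-Analysis.Analysis"
begin

text \<open>Double sequences x = (x_kl), k,l >= 1, represented as functions nat => nat => complex;
  values at index 0 are ignored by every notion below.\<close>
type_synonym dseq = "nat \<Rightarrow> nat \<Rightarrow> complex"

datatype conv_mode = P | BP | R

definition p_conv :: "dseq \<Rightarrow> complex \<Rightarrow> bool" where
  "p_conv x L \<longleftrightarrow> (\<forall>\<epsilon>>0. \<exists>N. \<forall>k\<ge>N. \<forall>l\<ge>N. cmod (x k l - L) < \<epsilon>)"

definition bp_conv :: "dseq \<Rightarrow> complex \<Rightarrow> bool" where
  "bp_conv x L \<longleftrightarrow> bounded {x k l |k l. 1 \<le> k \<and> 1 \<le> l} \<and> p_conv x L"

definition r_conv :: "dseq \<Rightarrow> complex \<Rightarrow> bool" where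
  "r_conv x L \<longleftrightarrow> p_conv x L \<and> (\<forall>k\<ge>1. convergent (\<lambda>l. x k l))
                              \<and> (\<forall>l\<ge>1. convergent (\<lambda>k. x k l))"

fun conv_to :: "conv_mode \<Rightarrow> dseq \<Rightarrow> complex \<Rightarrow> bool" where
  "conv_to P x L = p_conv x L"
| "conv_to BP x L = bp_conv x L"
| "conv_to R x L = r_conv x L"

definition C0 :: "conv_mode \<Rightarrow> dseq set" where
  "C0 \<theta> = {x. conv_to \<theta> x 0}"

definition Delta :: "dseq \<Rightarrow> nat \<Rightarrow> nat \<Rightarrow> complex" where
  "Delta x k l = x k l - x (Suc k) l - x k (Suc l) + x (Suc k) (Suc l)"

definition H :: "conv_mode \<Rightarrow> dseq set" where
  "H \<theta> = {x. (\<lambda>(k,l). cmod (of_nat (k*l) * Delta x k l)) summable_on ({1..} \<times> {1..})} \<inter> C0 \<theta>"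

definition BV :: "dseq set" where
  "BV = {x. (\<lambda>(k,l). cmod (Delta x k l)) summable_on ({1..} \<times> {1..})}"

definition BV0 :: "conv_mode \<Rightarrow> dseq set" where
  "BV0 \<theta> = BV \<inter> C0 \<theta>"

end

theory Submission
  imports Defs
begin

definition ex :: dseq where
  "ex k l = (if l = 1 then complex_of_real (1 / real k) else 0)"

lemma ex_Delta1: "Delta ex (Suc n) 1 = complex_of_real (1 / (real (Suc n) * real (Suc (Suc n))))"
proof -
  have e: "1 / real (Suc n) - 1 / real (Suc (Suc n)) = 1 / (real (Suc n) * real (Suc (Suc n)))"
    by (simp add: field_simps del: of_nat_Suc)
  have "Delta ex (Suc n) 1 = complex_of_real (1 / real (Suc n)) - complex_of_real (1 / real (Suc (Suc n)))"
    unfolding Delta_def ex_def by simp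
  also have "\<dots> = complex_of_real (1 / real (Suc n) - 1 / real (Suc (Suc n)))"
    by (simp only: of_real_diff)
  finally show ?thesis unfolding e .
qed

lemma ex_Delta_other: "l \<noteq> 1 \<Longrightarrow> 1 \<le> l \<Longrightarrow> Delta ex k l = 0"
  unfolding Delta_def ex_def by simp

lemma red:
  fixes g :: "nat \<times> nat \<Rightarrow> real"
  assumes nn: "\<And>x. g x \<ge> 0" and z: "\<And>k l. l \<noteq> 1 \<Longrightarrow> 1 \<le> l \<Longrightarrow> g (k,l) = 0"
  shows "g summable_on ({1..} \<times> {1..}) \<longleftrightarrow> summable (\<lambda>n. g (Suc n, 1))"
proof -
  have eq: "{1::nat..} = Suc ` UNIV"
  proof (intro set_eqI iffI)
    fix x :: nat assume "x \<in> {1..}"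
    then show "x \<in> Suc ` UNIV" using image_eqI[of x Suc "x-1"] by simp
  qed auto
  have "g summable_on ({1..} \<times> {1..}) \<longleftrightarrow> g summable_on ((\<lambda>k. (k,1)) ` {1..})"
  proof (rule summable_on_cong_neutral)
    fix x assume x: "x \<in> {1..} \<times> {1..} - (\<lambda>k. (k,1::nat)) ` {1::nat..}"
    obtain a b where ab: "x = (a,b)" by fastforce
    have "b \<noteq> 1" "1 \<le> b" using x ab by auto
    then show "g x = 0" using ab z by simp
  qed auto
  also have "\<dots> \<longleftrightarrow> (g \<circ> (\<lambda>k. (k,1))) summable_on {1..}"
    by (rule summable_on_reindex) (auto simp: inj_on_def)
  also have "(g \<circ> (\<lambda>k. (k,1))) summable_on {1..} \<longleftrightarrow> ((g \<circ> (\<lambda>k. (k,1))) \<circ> Suc) summable_on UNIV"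
    by (subst eq, rule summable_on_reindex) auto
  also have "((g \<circ> (\<lambda>k. (k,1))) \<circ> Suc) summable_on UNIV \<longleftrightarrow> summable (\<lambda>n. g (Suc n, 1))"
    using summable_on_UNIV_nonneg_real_iff[of "(g \<circ> (\<lambda>k. (k,1))) \<circ> Suc"] nn by (simp add: o_def)
  finally show ?thesis .
qed

lemma ex_BV: "ex \<in> BV"
proof -
  have "summable (\<lambda>n. 1 / (real (Suc n) * real (Suc (Suc n))))"
  proof (rule summable_comparison_test)
    show "summable (\<lambda>n. inverse (real (Suc n) ^ 2))"
    proof (rule iffD2[OF summable_Suc_iff[of "\<lambda>n. inverse (real n ^ 2)"]])
      show "summable (\<lambda>n. inverse (real n ^ 2))"
        by (rule inverse_power_summable) simp
    qed
    show "\<exists>N. \<forall>n\<ge>N. norm (1 / (real (Suc n) * real (Suc (Suc n)))) \<le> inverse (real (Suc n) ^ 2)"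
    proof (intro exI[of _ 0] allI impI)
      fix n :: nat
      have "real (Suc n) ^ 2 \<le> real (Suc n) * real (Suc (Suc n))" unfolding power2_eq_square
        by (intro mult_left_mono) auto
      then have "inverse (real (Suc n) * real (Suc (Suc n))) \<le> inverse (real (Suc n) ^ 2)"
        by (intro le_imp_inverse_le) auto
      then show "norm (1 / (real (Suc n) * real (Suc (Suc n)))) \<le> inverse (real (Suc n) ^ 2)"
        by (simp add: divide_inverse del: of_nat_Suc)
    qed
  qed
  also have "(\<lambda>n. 1 / (real (Suc n) * real (Suc (Suc n)))) = (\<lambda>n. (\<lambda>(k,l). cmod (Delta ex k l)) (Suc n, 1))"
    by (simp only: ex_Delta1 norm_of_real case_prod_conv) (simp del: of_nat_Suc)
  finally have "summable (\<lambda>n. (\<lambda>(k,l). cmod (Delta ex k l)) (Suc n, 1))" .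
  moreover have "(\<lambda>(k,l). cmod (Delta ex k l)) summable_on ({1..} \<times> {1..})
     \<longleftrightarrow> summable (\<lambda>n. (\<lambda>(k,l). cmod (Delta ex k l)) (Suc n, 1))"
    by (rule red) (auto simp: ex_Delta_other)
  ultimately show ?thesis unfolding BV_def by simp
qed

lemma ex_notH: "ex \<notin> H \<theta>"
proof
  assume "ex \<in> H \<theta>"
  then have s0: "(\<lambda>(k,l). cmod (of_nat (k*l) * Delta ex k l)) summable_on ({1..} \<times> {1..})"
    unfolding H_def by simp
  have "(\<lambda>(k,l). cmod (of_nat (k*l) * Delta ex k l)) summable_on ({1..} \<times> {1..})
     \<longleftrightarrow> summable (\<lambda>n. (\<lambda>(k,l). cmod (of_nat (k*l) * Delta ex k l)) (Suc n, 1))"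
    by (rule red) (auto simp: ex_Delta_other)
  with s0 have "summable (\<lambda>n. cmod (of_nat (Suc n * 1) * Delta ex (Suc n) 1))"
    by simp
  also have "(\<lambda>n. cmod (of_nat (Suc n * 1) * Delta ex (Suc n) 1)) = (\<lambda>n. inverse (real (Suc (Suc n))))"
  proof
    fix n
    have "cmod (of_nat (Suc n * 1) * Delta ex (Suc n) 1) = real (Suc n) * (1 / (real (Suc n) * real (Suc (Suc n))))"
      unfolding ex_Delta1 norm_mult norm_of_real norm_of_nat by simp
    also have "\<dots> = inverse (real (Suc (Suc n)))"
      by (simp add: field_simps del: of_nat_Suc)
    finally show "cmod (of_nat (Suc n * 1) * Delta ex (Suc n) 1) = inverse (real (Suc (Suc n)))" .
  qed
  finally have "summable (\<lambda>n. inverse (real (Suc (Suc n))))" .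
  then have "summable (\<lambda>n. inverse (real n))"
    using summable_Suc_iff[of "\<lambda>n. inverse (real n)"] summable_Suc_iff[of "\<lambda>n. inverse (real (Suc n))"] by simp
  then show False using not_summable_harmonic[where 'a=real] by simp
qed

lemma ex_C0: "ex \<in> C0 \<theta>"
proof -
  have p: "p_conv ex 0" unfolding p_conv_def
  proof (intro allI impI)
    fix e :: real assume "e > 0"
    show "\<exists>N. \<forall>k\<ge>N. \<forall>l\<ge>N. cmod (ex k l - 0) < e"
      by (rule exI[of _ 2]) (auto simp: ex_def \<open>e > 0\<close>)
  qed
  have b: "bounded {ex k l |k l. 1 \<le> k \<and> 1 \<le> l}"
    unfolding bounded_iff
  proof (rule exI[of _ 1], clarify)
    fix k l :: nat assume "1 \<le> k"
    then show "cmod (ex k l) \<le> 1" by (auto simp: ex_def norm_divide)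
  qed
  have rows: "convergent (\<lambda>l. ex k l)" for k
  proof -
    have "(\<lambda>l. ex k (l + 2)) \<longlonglongrightarrow> 0" by (simp add: ex_def)
    then have "(\<lambda>l. ex k l) \<longlonglongrightarrow> 0" by (rule LIMSEQ_offset)
    then show ?thesis by (auto simp: convergent_def)
  qed
  have cols: "convergent (\<lambda>k. ex k l)" for l
  proof (cases "l = 1")
    case True
    have "(\<lambda>k. complex_of_real (1 / real k)) \<longlonglongrightarrow> of_real 0"
      by (rule tendsto_of_real) (rule lim_const_over_n)
    then show ?thesis using True by (auto simp: ex_def convergent_def)
  next
    case False then show ?thesis by (auto simp: ex_def convergent_def)
  qed
  show ?thesis unfolding C0_def
    using b by (cases \<theta>) (auto simp: p rows cols bp_conv_def r_conv_def)
qed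

lemma H_sub_BV: "H \<theta> \<subseteq> BV"
proof
  fix x assume "x \<in> H \<theta>"
  then have s: "(\<lambda>(k,l). cmod (of_nat (k*l) * Delta x k l)) summable_on ({1..} \<times> {1..})"
    unfolding H_def by auto
  show "x \<in> BV" unfolding BV_def mem_Collect_eq
  proof (rule summable_on_comparison_test[OF s])
    fix y :: "nat \<times> nat" assume "y \<in> {1..} \<times> {1..}"
    then obtain k l where y: "y = (k,l)" "k \<ge> 1" "l \<ge> 1" by auto
    have "1 \<le> k*l" using y by (metis mult_le_mono nat_mult_1)
    then have "1 \<le> real (k*l)" by (metis of_nat_1 of_nat_le_iff)
    then have "cmod (Delta x k l) \<le> real (k*l) * cmod (Delta x k l)"
      by (simp add: mult_le_cancel_right1 del: of_nat_mult)
    then show "(\<lambda>(k,l). cmod (Delta x k l)) y \<le> (\<lambda>(k,l). cmod (of_nat (k*l) * Delta x k l)) y"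
      using y by (simp add: norm_mult del: of_nat_mult)
  qed auto
qed

theorem theorem2p3:
  fixes \<theta> :: conv_mode
  shows "H \<theta> \<subset> BV \<and> H \<theta> \<subset> BV0 \<theta>"
proof -
  have "H \<theta> \<subseteq> BV0 \<theta>" using H_sub_BV[of \<theta>] unfolding BV0_def H_def by auto
  moreover have "ex \<in> BV0 \<theta>" using ex_BV ex_C0 unfolding BV0_def by auto
  ultimately show ?thesis using H_sub_BV[of \<theta>] ex_notH[of \<theta>] ex_BV by blast
qed

end
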